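(* Let $\lambda=\inf\{u : |\mathrm{GHZ}\rangle^{\otimes\lfloor un\rfloor}\stackrel{\textrm{SLOCC}}{\longrightarrow}|\Phi^3\rangle^{\otimes n}\text{ for all sufficiently large } n\}$. Then $\lambda=\omega$, the exponent of matrix multiplication, i.e. the smallest real number $\omega$ such that two $N\times N$ matrices can be multiplied using $O(N^{\omega})$ multiplications, each being a product of a linear function of the entries of the first matrix and a linear function of the entries of the second matrix.
   Context: Three parties $A,B,C$. $|\mathrm{GHZ}\rangle=\frac{1}{\sqrt2}(|000\rangle+|111\rangle)$ with one qubit held by each party. Let $|\Phi\rangle=|00\rangle+|11\rangle$. $|\Phi^3\rangle=|\Phi\rangle_{AB}|\Phi\rangle_{AC}|\Phi\rangle_{BC}$ is the state in which each pair of parties shares one EPR state (each party holds two qubits). Tensor powers are taken with each party holding its own parts of all copies. $|\psi\rangle\stackrel{\textrm{SLOCC}}{\longrightarrow}|\phi\rangle$ means $|\psi\rangle$ can be transformed into $|\phi\rangle$ with nonzero probability by local operations and classical communication; equivalently, there exist linear operators $A,B,C$ on the respective parties' spaces with $(A\otimes B\otimes C)|\psi\rangle=|\phi\rangle$ up to a nonzero scalar. *)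

theory Defs
  imports Complex_Main
begin

text \<open>A (pure, unnormalised-allowed) tripartite state is given by its amplitude
function on computational basis indices, together with the finite sets of
local basis indices of the parties A, B, C.\<close>

definition slocc ::
  "'a set \<Rightarrow> 'b set \<Rightarrow> 'c set \<Rightarrow> ('a \<Rightarrow> 'b \<Rightarrow> 'c \<Rightarrow> complex) \<Rightarrow>
   'd set \<Rightarrow> 'e set \<Rightarrow> 'f set \<Rightarrow> ('d \<Rightarrow> 'e \<Rightarrow> 'f \<Rightarrow> complex) \<Rightarrow> bool" where
  "slocc IA IB IC psi JA JB JC phi \<longleftrightarrow>
     (\<exists>(MA :: 'd \<Rightarrow> 'a \<Rightarrow> complex) (MB :: 'e \<Rightarrow> 'b \<Rightarrow> complex) (MC :: 'f \<Rightarrow> 'c \<Rightarrow> complex) s.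
        s \<noteq> 0 \<and>
        (\<forall>x\<in>JA. \<forall>y\<in>JB. \<forall>z\<in>JC.
           (\<Sum>a\<in>IA. \<Sum>b\<in>IB. \<Sum>c\<in>IC. MA x a * MB y b * MC z c * psi a b c) = s * phi x y z))"

text \<open>Tensor power: n copies, each party holds its own parts of all copies;
a local basis index is a list of length n of single-copy local indices.\<close>
definition pow_idx :: "'a set \<Rightarrow> nat \<Rightarrow> 'a list set" where
  "pow_idx I n = {xs. length xs = n \<and> set xs \<subseteq> I}"

definition tpow :: "('a \<Rightarrow> 'b \<Rightarrow> 'c \<Rightarrow> complex) \<Rightarrow> nat \<Rightarrow>
    'a list \<Rightarrow> 'b list \<Rightarrow> 'c list \<Rightarrow> complex" where
  "tpow psi n xs ys zs = (\<Prod>i<n. psi (xs ! i) (ys ! i) (zs ! i))"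

definition qubit :: "nat set" where "qubit = {0, 1}"

definition GHZ :: "nat \<Rightarrow> nat \<Rightarrow> nat \<Rightarrow> complex" where
  "GHZ a b c = (if a = b \<and> b = c then complex_of_real (1 / sqrt 2) else 0)"

text \<open>Phi^3 = Phi_AB Phi_AC Phi_BC with Phi = |00> + |11>.
A holds (its AB qubit, its AC qubit), B holds (its AB qubit, its BC qubit),
C holds (its AC qubit, its BC qubit).\<close>
definition Phi3 :: "nat \<times> nat \<Rightarrow> nat \<times> nat \<Rightarrow> nat \<times> nat \<Rightarrow> complex" where
  "Phi3 a b c = (if fst a = fst b \<and> snd a = fst c \<and> snd b = snd c then 1 else 0)"

definition GHZ_pow_to_Phi3_pow :: "nat \<Rightarrow> nat \<Rightarrow> bool" where
  "GHZ_pow_to_Phi3_pow m n \<longleftrightarrow>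
     slocc (pow_idx qubit m) (pow_idx qubit m) (pow_idx qubit m) (tpow GHZ m)
           (pow_idx (qubit \<times> qubit) n) (pow_idx (qubit \<times> qubit) n)
           (pow_idx (qubit \<times> qubit) n) (tpow Phi3 n)"

definition lambda_GHZ :: real where
  "lambda_GHZ = Inf {u :: real. \<exists>N0. \<forall>n\<ge>N0. GHZ_pow_to_Phi3_pow (nat \<lfloor>u * real n\<rfloor>) n}"

definition bilinear_mm_algo :: "nat \<Rightarrow> nat \<Rightarrow> bool" where
  "bilinear_mm_algo N r \<longleftrightarrow>
     (\<exists>(u :: nat \<Rightarrow> nat \<Rightarrow> nat \<Rightarrow> complex) (v :: nat \<Rightarrow> nat \<Rightarrow> nat \<Rightarrow> complex)
        (w :: nat \<Rightarrow> nat \<Rightarrow> nat \<Rightarrow> complex).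
       \<forall>(X :: nat \<Rightarrow> nat \<Rightarrow> complex) (Y :: nat \<Rightarrow> nat \<Rightarrow> complex). \<forall>i<N. \<forall>k<N.
         (\<Sum>j<N. X i j * Y j k) =
         (\<Sum>l<r. w l i k * (\<Sum>a<N. \<Sum>b<N. u l a b * X a b)
                           * (\<Sum>a<N. \<Sum>b<N. v l a b * Y a b)))"

definition omega_mm :: real where
  "omega_mm = Inf {tau :: real. \<exists>C N0. \<forall>N\<ge>N0. \<exists>r. bilinear_mm_algo N r \<and>
                     real r \<le> C * real N powr tau}"

end

theory Submission
  imports Defs
begin


definition mm_tensor :: "nat \<Rightarrow> nat \<Rightarrow> bool" where
  "mm_tensor N r \<longleftrightarrow>
     (\<exists>(u :: nat \<Rightarrow> nat \<Rightarrow> nat \<Rightarrow> complex) (v :: nat \<Rightarrow> nat \<Rightarrow> nat \<Rightarrow> complex)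
        (w :: nat \<Rightarrow> nat \<Rightarrow> nat \<Rightarrow> complex).
       \<forall>a<N. \<forall>b<N. \<forall>c<N. \<forall>d<N. \<forall>i<N. \<forall>k<N.
         (if a = i \<and> b = c \<and> d = k then 1 else 0) =
         (\<Sum>l<r. w l i k * u l a b * v l c d))"

lemma prod4:
  fixes w :: complex
  shows "w * (\<Sum>a\<in>A. \<Sum>b\<in>B. f a b) * (\<Sum>c\<in>C. \<Sum>d\<in>D. g c d) =
     (\<Sum>a\<in>A. \<Sum>b\<in>B. \<Sum>c\<in>C. \<Sum>d\<in>D. w * f a b * g c d)"
proof -
  have g: "\<And>Y::complex. w * (\<Sum>a\<in>A. \<Sum>b\<in>B. f a b) * Y =
     (\<Sum>a\<in>A. \<Sum>b\<in>B. w * f a b * Y)"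
    by (simp only: sum_distrib_left sum_distrib_right)
  have "w * (\<Sum>a\<in>A. \<Sum>b\<in>B. f a b) * (\<Sum>c\<in>C. \<Sum>d\<in>D. g c d) =
     (\<Sum>a\<in>A. \<Sum>b\<in>B. w * f a b * (\<Sum>c\<in>C. \<Sum>d\<in>D. g c d))"
    by (rule g)
  also have "\<dots> = (\<Sum>a\<in>A. \<Sum>b\<in>B. \<Sum>c\<in>C. \<Sum>d\<in>D. w * f a b * g c d)"
    by (simp only: sum_distrib_left)
  finally show ?thesis .
qed
lemma swap5:
  "(\<Sum>l\<in>L. \<Sum>a\<in>A. \<Sum>b\<in>B. \<Sum>c\<in>C. \<Sum>d\<in>D. f l a b c d) =
     (\<Sum>a\<in>A. \<Sum>b\<in>B. \<Sum>c\<in>C. \<Sum>d\<in>D. \<Sum>l\<in>L. f l a b c d)"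
  by (simp only: sum.swap[of _ L])

lemma sum_delta2:
  fixes f :: "nat \<Rightarrow> nat \<Rightarrow> complex"
  assumes "a < N" "b < N"
  shows "(\<Sum>x<N. \<Sum>y<N. f x y * (if x = a \<and> y = b then 1 else 0)) = f a b"
proof -
  have "(\<Sum>x<N. \<Sum>y<N. f x y * (if x = a \<and> y = b then 1 else 0))
       = (\<Sum>x<N. if x = a then (\<Sum>y<N. f x y * (if y = b then 1 else 0)) else 0)"
    by (rule sum.cong) auto
  also have "\<dots> = (\<Sum>y<N. f a y * (if y = b then 1 else 0))"
    using assms by (simp add: sum.delta)
  also have "\<dots> = f a b" using assms by (simp add: sum.delta if_distrib cong: if_cong)
  finally show ?thesis .
qed

lemma bilinear_imp_tensor: "bilinear_mm_algo N r \<Longrightarrow> mm_tensor N r"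
  unfolding bilinear_mm_algo_def mm_tensor_def
proof (elim exE, intro exI allI impI)
  fix u v w a b c d i k
  assume H: "\<forall>(X :: nat \<Rightarrow> nat \<Rightarrow> complex) (Y :: nat \<Rightarrow> nat \<Rightarrow> complex). \<forall>i<N. \<forall>k<N.
         (\<Sum>j<N. X i j * Y j k) =
         (\<Sum>l<r. w l i k * (\<Sum>a<N. \<Sum>b<N. u l a b * X a b)
                           * (\<Sum>a<N. \<Sum>b<N. v l a b * Y a b))"
    and lt: "a < N" "b < N" "c < N" "d < N" "i < N" "k < N"
  define X :: "nat \<Rightarrow> nat \<Rightarrow> complex" where "X = (\<lambda>x y. if x = a \<and> y = b then 1 else 0)"
  define Y :: "nat \<Rightarrow> nat \<Rightarrow> complex" where "Y = (\<lambda>x y. if x = c \<and> y = d then 1 else 0)"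
  have e: "\<And>j. X i j * Y j k = (if j = b then (if a = i \<and> b = c \<and> d = k then 1 else 0) else 0)"
    unfolding X_def Y_def by auto
  have 1: "(\<Sum>j<N. X i j * Y j k) = (if a = i \<and> b = c \<and> d = k then 1 else 0)"
    using lt by (simp add: e sum.delta)
  have 2: "\<And>l. (\<Sum>x<N. \<Sum>y<N. u l x y * X x y) = u l a b"
    unfolding X_def by (rule sum_delta2[OF lt(1,2)])
  have 3: "\<And>l. (\<Sum>x<N. \<Sum>y<N. v l x y * Y x y) = v l c d"
    unfolding Y_def by (rule sum_delta2[OF lt(3,4)])
  show "(if a = i \<and> b = c \<and> d = k then 1 else 0) = (\<Sum>l<r. w l i k * u l a b * v l c d)"
    using H[rule_format, OF lt(5,6), of X Y] 1 2 3 by simp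
qed

lemma tensor_imp_bilinear: "mm_tensor N r \<Longrightarrow> bilinear_mm_algo N r"
  unfolding bilinear_mm_algo_def mm_tensor_def
proof (elim exE, intro exI allI impI)
  fix u v w :: "nat \<Rightarrow> nat \<Rightarrow> nat \<Rightarrow> complex" and X Y :: "nat \<Rightarrow> nat \<Rightarrow> complex" and i k
  assume H: "\<forall>a<N. \<forall>b<N. \<forall>c<N. \<forall>d<N. \<forall>i<N. \<forall>k<N.
         (if a = i \<and> b = c \<and> d = k then 1 else 0) =
         (\<Sum>l<r. w l i k * u l a b * v l c d)" and ik: "i < N" "k < N"
  have "(\<Sum>l<r. w l i k * (\<Sum>a<N. \<Sum>b<N. u l a b * X a b) * (\<Sum>c<N. \<Sum>d<N. v l c d * Y c d))
      = (\<Sum>l<r. \<Sum>a<N. \<Sum>b<N. \<Sum>c<N. \<Sum>d<N. X a b * Y c d * (w l i k * u l a b * v l c d))"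
    by (rule sum.cong[OF refl], subst prod4, simp only: mult_ac)
  also have "\<dots> = (\<Sum>a<N. \<Sum>b<N. \<Sum>c<N. \<Sum>d<N. \<Sum>l<r. X a b * Y c d * (w l i k * u l a b * v l c d))"
    by (rule swap5)
  also have "\<dots> = (\<Sum>a<N. \<Sum>b<N. \<Sum>c<N. \<Sum>d<N. X a b * Y c d * (if a = i \<and> b = c \<and> d = k then 1 else 0))"
    using H ik by (simp add: sum_distrib_left[symmetric])
  also have "\<dots> = (\<Sum>b<N. X i b * Y b k)"
  proof -
    have e: "\<And>a b c d. X a b * Y c d * (if a = i \<and> b = c \<and> d = k then 1 else 0) =
      (if d = k then if c = b then if a = i then X a b * Y c d else 0 else 0 else 0)" by auto
    have f: "\<And>P (f :: nat \<Rightarrow> complex) A. (\<Sum>x\<in>A. if P then f x else 0) = (if P then sum f A else 0)"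
      by auto
    show ?thesis using ik by (simp only: e, simp add: sum.delta sum.delta' f)
  qed
  finally show "(\<Sum>j<N. X i j * Y j k) = (\<Sum>l<r. w l i k * (\<Sum>a<N. \<Sum>b<N. u l a b * X a b) * (\<Sum>a<N. \<Sum>b<N. v l a b * Y a b))"
    by simp
qed

lemma bilinear_iff_tensor: "bilinear_mm_algo N r \<longleftrightarrow> mm_tensor N r"
  using bilinear_imp_tensor tensor_imp_bilinear by blast



fun dec :: "nat \<Rightarrow> nat \<Rightarrow> nat list" where
  "dec 0 k = []"
| "dec (Suc n) k = k mod 2 # dec n (k div 2)"

fun enc :: "nat list \<Rightarrow> nat" where
  "enc [] = 0"
| "enc (x # xs) = x + 2 * enc xs"

lemma length_dec[simp]: "length (dec n k) = n"
  by (induction n arbitrary: k) auto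

lemma set_dec: "set (dec n k) \<subseteq> qubit"
  by (induction n arbitrary: k) (auto simp: qubit_def)

lemma dec_in: "dec n k \<in> pow_idx qubit n"
  using set_dec by (auto simp: pow_idx_def)

lemma enc_lt: "set xs \<subseteq> qubit \<Longrightarrow> enc xs < 2 ^ length xs"
  by (induction xs) (auto simp: qubit_def)

lemma enc_lt': "xs \<in> pow_idx qubit n \<Longrightarrow> enc xs < 2 ^ n"
  using enc_lt by (auto simp: pow_idx_def)

lemma enc_dec: "k < 2 ^ n \<Longrightarrow> enc (dec n k) = k"
proof (induction n arbitrary: k)
  case 0 then show ?case by simp
next
  case (Suc n)
  have "k div 2 < 2 ^ n" using Suc.prems by auto
  then show ?case using Suc.IH by simp
qed

lemma dec_enc: "set xs \<subseteq> qubit \<Longrightarrow> dec (length xs) (enc xs) = xs"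
  by (induction xs) (auto simp: qubit_def)

lemma dec_enc': "xs \<in> pow_idx qubit n \<Longrightarrow> dec n (enc xs) = xs"
  using dec_enc by (auto simp: pow_idx_def)

lemma dec_inj: "a < 2 ^ n \<Longrightarrow> b < 2 ^ n \<Longrightarrow> dec n a = dec n b \<longleftrightarrow> a = b"
  by (metis enc_dec)

lemma enc_inj: "xs \<in> pow_idx qubit n \<Longrightarrow> ys \<in> pow_idx qubit n \<Longrightarrow> enc xs = enc ys \<longleftrightarrow> xs = ys"
  by (metis dec_enc')

lemma bij_dec: "bij_betw (dec n) {..<2 ^ n} (pow_idx qubit n)"
  by (rule bij_betw_byWitness[where f' = enc]) (auto simp: enc_dec dec_enc' dec_in enc_lt')

lemma sum_pow_idx: "(\<Sum>a\<in>pow_idx qubit n. g a) = (\<Sum>l<2 ^ n. g (dec n l))"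
  using sum.reindex_bij_betw[OF bij_dec, of g n] by simp

lemma finite_pow_idx: "finite (pow_idx qubit n)"
  using bij_betw_finite[OF bij_dec] by blast

definition kap :: complex where "kap = complex_of_real (1 / sqrt 2)"

lemma kap_nz: "kap \<noteq> 0" by (simp add: kap_def)

lemma tpow_GHZ:
  assumes "a \<in> pow_idx qubit m" "b \<in> pow_idx qubit m" "c \<in> pow_idx qubit m"
  shows "tpow GHZ m a b c = (if a = b \<and> b = c then kap ^ m else 0)"
proof (cases "a = b \<and> b = c")
  case True then show ?thesis by (simp add: tpow_def GHZ_def kap_def)
next
  case False
  have len: "length a = m" "length b = m" "length c = m" using assms by (auto simp: pow_idx_def)
  then obtain i where i: "i < m" "a ! i \<noteq> b ! i \<or> b ! i \<noteq> c ! i"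
    using False nth_equalityI by metis
  have "GHZ (a ! i) (b ! i) (c ! i) = 0" using i by (auto simp: GHZ_def)
  then have "tpow GHZ m a b c = 0" unfolding tpow_def using i(1)
    by (metis finite_lessThan lessThan_iff prod_zero)
  then show ?thesis using False by (simp only: False if_False)
qed

lemma tpow_Phi3:
  assumes "length x = n" "length y = n" "length z = n"
  shows "tpow Phi3 n x y z =
    (if map fst x = map fst y \<and> map snd x = map fst z \<and> map snd y = map snd z then 1 else 0)"
proof (cases "map fst x = map fst y \<and> map snd x = map fst z \<and> map snd y = map snd z")
  case True
  then have "\<forall>i<n. Phi3 (x ! i) (y ! i) (z ! i) = 1"
    using assms by (auto simp: Phi3_def) (metis nth_map)+
  then show ?thesis using True by (simp add: tpow_def)
next
  case False
  then obtain i where i: "i < n" "fst (x ! i) \<noteq> fst (y ! i) \<or> snd (x!i) \<noteq> fst (z!i) \<or> snd (y!i) \<noteq> snd (z!i)"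
    using assms by (metis (no_types, lifting) length_map nth_equalityI nth_map)
  have "Phi3 (x ! i) (y ! i) (z ! i) = 0" using i by (auto simp: Phi3_def)
  then have "tpow Phi3 n x y z = 0" unfolding tpow_def using i(1)
    by (metis finite_lessThan lessThan_iff prod_zero)
  then show ?thesis using False by (simp only: False if_False)
qed

lemma sum_if_const: "(\<Sum>x\<in>A. if P then f x else 0) = (if P then sum f A else 0)"
  by auto

lemma sum3_GHZ:
  fixes f g h :: "nat list \<Rightarrow> complex"
  shows "(\<Sum>a\<in>pow_idx qubit m. \<Sum>b\<in>pow_idx qubit m. \<Sum>c\<in>pow_idx qubit m.
            f a * g b * h c * tpow GHZ m a b c) =
         kap ^ m * (\<Sum>l<2 ^ m. f (dec m l) * g (dec m l) * h (dec m l))"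
proof -
  let ?P = "pow_idx qubit m"
  have "(\<Sum>a\<in>?P. \<Sum>b\<in>?P. \<Sum>c\<in>?P. f a * g b * h c * tpow GHZ m a b c)
      = (\<Sum>a\<in>?P. \<Sum>b\<in>?P. \<Sum>c\<in>?P. if c = a then if b = a then kap ^ m * (f a * g a * h a) else 0 else 0)"
    by (intro sum.cong refl) (auto simp: tpow_GHZ)
  also have "\<dots> = (\<Sum>a\<in>?P. kap ^ m * (f a * g a * h a))"
    using finite_pow_idx by (simp add: sum.delta sum_if_const)
  also have "\<dots> = kap ^ m * (\<Sum>l<2 ^ m. f (dec m l) * g (dec m l) * h (dec m l))"
    by (simp add: sum_distrib_left[symmetric] sum_pow_idx)
  finally show ?thesis .
qed



lemma zip_in: "zip (dec n p) (dec n q) \<in> pow_idx (qubit \<times> qubit) n"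
proof -
  have "set (zip (dec n p) (dec n q)) \<subseteq> set (dec n p) \<times> set (dec n q)"
    by (auto dest: set_zip_leftD set_zip_rightD)
  then show ?thesis using set_dec[of n p] set_dec[of n q] by (auto simp: pow_idx_def)
qed

lemma map_fst_zip_dec[simp]: "map fst (zip (dec n p) (dec n q)) = dec n p"
  by simp
lemma map_snd_zip_dec[simp]: "map snd (zip (dec n p) (dec n q)) = dec n q"
  by simp

lemma GHZ_imp_tensor:
  assumes "GHZ_pow_to_Phi3_pow m n"
  shows "mm_tensor (2 ^ n) (2 ^ m)"
proof -
  obtain MA MB MC s where s: "s \<noteq> 0" and
    H: "\<forall>x\<in>pow_idx (qubit \<times> qubit) n. \<forall>y\<in>pow_idx (qubit \<times> qubit) n. \<forall>z\<in>pow_idx (qubit \<times> qubit) n.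
       (\<Sum>a\<in>pow_idx qubit m. \<Sum>b\<in>pow_idx qubit m. \<Sum>c\<in>pow_idx qubit m.
          MA x a * MB y b * MC z c * tpow GHZ m a b c) = s * tpow Phi3 n x y z"
    using assms unfolding GHZ_pow_to_Phi3_pow_def slocc_def by blast
  define A where "A = (\<lambda>a b. zip (dec n b) (dec n a))"
  define B where "B = (\<lambda>c d. zip (dec n c) (dec n d))"
  define C where "C = (\<lambda>i k. zip (dec n i) (dec n k))"
  define u where "u = (\<lambda>l a b. kap ^ m / s * MA (A a b) (dec m l))"
  define v where "v = (\<lambda>l c d. MB (B c d) (dec m l))"
  define w where "w = (\<lambda>l i k. MC (C i k) (dec m l))"
  show ?thesis unfolding mm_tensor_def
  proof (intro exI allI impI)
    fix a b c d i k :: nat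
    assume lt: "a < 2 ^ n" "b < 2 ^ n" "c < 2 ^ n" "d < 2 ^ n" "i < 2 ^ n" "k < 2 ^ n"
    have "s * tpow Phi3 n (A a b) (B c d) (C i k) =
       kap ^ m * (\<Sum>l<2 ^ m. MA (A a b) (dec m l) * MB (B c d) (dec m l) * MC (C i k) (dec m l))"
    proof -
      have z: "A a b \<in> pow_idx (qubit \<times> qubit) n" "B c d \<in> pow_idx (qubit \<times> qubit) n"
        "C i k \<in> pow_idx (qubit \<times> qubit) n" unfolding A_def B_def C_def by (rule zip_in)+
      show ?thesis using H[rule_format, OF z] sum3_GHZ[of "MA (A a b)" "MB (B c d)" "MC (C i k)" m]
        by simp
    qed
    moreover have "tpow Phi3 n (A a b) (B c d) (C i k) = (if a = i \<and> b = c \<and> d = k then 1 else 0)"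
      using dec_inj[OF lt(2) lt(3)] dec_inj[OF lt(1) lt(5)] dec_inj[OF lt(4) lt(6)]
      unfolding A_def B_def C_def by (subst tpow_Phi3) auto
    ultimately have "(if a = i \<and> b = c \<and> d = k then 1 else 0) =
       kap ^ m / s * (\<Sum>l<2 ^ m. MA (A a b) (dec m l) * MB (B c d) (dec m l) * MC (C i k) (dec m l))"
      using s by (simp add: field_simps)
    also have "\<dots> = (\<Sum>l<2 ^ m. w l i k * u l a b * v l c d)"
      by (simp add: sum_distrib_left u_def v_def w_def mult_ac)
    finally show "(if a = i \<and> b = c \<and> d = k then 1 else 0) = (\<Sum>l<2 ^ m. w l i k * u l a b * v l c d)" .
  qed
qed

lemma tensor_imp_GHZ:
  assumes "mm_tensor (2 ^ n) r" "r \<le> 2 ^ m"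
  shows "GHZ_pow_to_Phi3_pow m n"
proof -
  obtain u v w :: "nat \<Rightarrow> nat \<Rightarrow> nat \<Rightarrow> complex" where
    H: "\<forall>a<2^n. \<forall>b<2^n. \<forall>c<2^n. \<forall>d<2^n. \<forall>i<2^n. \<forall>k<2^n.
         (if a = i \<and> b = c \<and> d = k then 1 else 0) =
         (\<Sum>l<r. w l i k * u l a b * v l c d)"
    using assms(1) unfolding mm_tensor_def by blast
  define MA where "MA = (\<lambda>x \<alpha>. if enc \<alpha> < r then u (enc \<alpha>) (enc (map snd x)) (enc (map fst x)) else 0)"
  define MB where "MB = (\<lambda>y \<alpha>. v (enc \<alpha>) (enc (map fst y)) (enc (map snd y)))"
  define MC where "MC = (\<lambda>z \<alpha>. w (enc \<alpha>) (enc (map fst z)) (enc (map snd z)))"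
  show ?thesis unfolding GHZ_pow_to_Phi3_pow_def slocc_def
  proof (intro exI conjI ballI)
    show "kap ^ m \<noteq> 0" using kap_nz by simp
    fix x y z assume xyz: "x \<in> pow_idx (qubit \<times> qubit) n" "y \<in> pow_idx (qubit \<times> qubit) n"
       "z \<in> pow_idx (qubit \<times> qubit) n"
    have pf: "map fst p \<in> pow_idx qubit n" "map snd p \<in> pow_idx qubit n"
      if "p \<in> pow_idx (qubit \<times> qubit) n" for p
      using that by (auto simp: pow_idx_def)
    have len: "length x = n" "length y = n" "length z = n" using xyz by (auto simp: pow_idx_def)
    let ?a = "enc (map snd x)" and ?b = "enc (map fst x)" and ?c = "enc (map fst y)"
      and ?d = "enc (map snd y)" and ?i = "enc (map fst z)" and ?k = "enc (map snd z)"
    have lts: "?a < 2^n" "?b < 2^n" "?c < 2^n" "?d < 2^n" "?i < 2^n" "?k < 2^n"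
      using pf xyz enc_lt' by blast+
    have T: "tpow Phi3 n x y z = (if ?a = ?i \<and> ?b = ?c \<and> ?d = ?k then 1 else 0)"
      using enc_inj[OF pf(2)[OF xyz(1)] pf(1)[OF xyz(3)]] enc_inj[OF pf(1)[OF xyz(1)] pf(1)[OF xyz(2)]]
        enc_inj[OF pf(2)[OF xyz(2)] pf(2)[OF xyz(3)]]
      by (subst tpow_Phi3[OF len]) auto
    have "(\<Sum>a\<in>pow_idx qubit m. \<Sum>b\<in>pow_idx qubit m. \<Sum>c\<in>pow_idx qubit m.
          MA x a * MB y b * MC z c * tpow GHZ m a b c)
        = kap ^ m * (\<Sum>l<2 ^ m. MA x (dec m l) * MB y (dec m l) * MC z (dec m l))"
      by (rule sum3_GHZ)
    also have "(\<Sum>l<2 ^ m. MA x (dec m l) * MB y (dec m l) * MC z (dec m l))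
        = (\<Sum>l<2 ^ m. if l < r then w l ?i ?k * u l ?a ?b * v l ?c ?d else 0)"
      by (intro sum.cong refl) (auto simp: MA_def MB_def MC_def enc_dec)
    also have "\<dots> = (\<Sum>l<r. w l ?i ?k * u l ?a ?b * v l ?c ?d)"
    proof -
      have e: "{..<2 ^ m} \<inter> {l. l < r} = {..<r}" using assms(2) by auto
      show ?thesis by (simp only: sum.If_cases finite_lessThan e) simp
    qed
    also have "\<dots> = tpow Phi3 n x y z"
      using H[rule_format, OF lts] T by simp
    finally show "(\<Sum>a\<in>pow_idx qubit m. \<Sum>b\<in>pow_idx qubit m. \<Sum>c\<in>pow_idx qubit m.
          MA x a * MB y b * MC z c * tpow GHZ m a b c) = kap ^ m * tpow Phi3 n x y z" .
  qed
qed



lemma mm_mono: assumes "mm_tensor N r" "M \<le> N" shows "mm_tensor M r"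
proof -
  obtain u v w :: "nat \<Rightarrow> nat \<Rightarrow> nat \<Rightarrow> complex" where
    H: "\<forall>a<N. \<forall>b<N. \<forall>c<N. \<forall>d<N. \<forall>i<N. \<forall>k<N.
         (if a = i \<and> b = c \<and> d = k then 1 else 0) = (\<Sum>l<r. w l i k * u l a b * v l c d)"
    using assms(1) unfolding mm_tensor_def by blast
  have "\<forall>a<M. \<forall>b<M. \<forall>c<M. \<forall>d<M. \<forall>i<M. \<forall>k<M.
         (if a = i \<and> b = c \<and> d = k then 1 else 0) = (\<Sum>l<r. w l i k * u l a b * v l c d)"
  proof (intro allI impI)
    fix a b c d i k assume "a < M" "b < M" "c < M" "d < M" "i < M" "k < M"
    then have "a < N" "b < N" "c < N" "d < N" "i < N" "k < N" using assms(2) by linarith+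
    then show "(if a = i \<and> b = c \<and> d = k then 1 else 0) = (\<Sum>l<r. w l i k * u l a b * v l c d)"
      using H by blast
  qed
  then show ?thesis unfolding mm_tensor_def by blast
qed

lemma not_mm_0: "N \<ge> 1 \<Longrightarrow> \<not> mm_tensor N 0"
proof
  assume "N \<ge> 1" "mm_tensor N 0"
  then obtain u v w :: "nat \<Rightarrow> nat \<Rightarrow> nat \<Rightarrow> complex" where
    H: "\<forall>a<N. \<forall>b<N. \<forall>c<N. \<forall>d<N. \<forall>i<N. \<forall>k<N.
         (if a = i \<and> b = c \<and> d = k then 1 else 0) = (\<Sum>l<(0::nat). w l i k * u l a b * v l c d)"
    unfolding mm_tensor_def by blast
  have "(0::nat) < N" using \<open>N \<ge> 1\<close> by simp
  from H[rule_format, OF this this this this this this] show False by simp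
qed

lemma not_mm_2_1: "\<not> mm_tensor 2 1"
proof
  assume "mm_tensor 2 1"
  then obtain u v w :: "nat \<Rightarrow> nat \<Rightarrow> nat \<Rightarrow> complex" where
    H: "\<forall>a<2. \<forall>b<2. \<forall>c<2. \<forall>d<2. \<forall>i<2. \<forall>k<2.
         (if a = i \<and> b = c \<and> d = k then 1 else 0) = (\<Sum>l<1. w l i k * u l a b * v l c d)"
    unfolding mm_tensor_def by blast
  have 1: "w 0 0 0 * u 0 0 0 * v 0 0 0 = 1" using H[rule_format, of 0 0 0 0 0 0] by simp
  have 2: "w 0 0 0 * u 0 0 1 * v 0 1 0 = 1" using H[rule_format, of 0 1 1 0 0 0] by simp
  have 3: "w 0 0 0 * u 0 0 0 * v 0 1 0 = 0" using H[rule_format, of 0 0 1 0 0 0] by simp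
  from 1 2 3 show False by auto
qed

definition LamSet :: "real set" where
  "LamSet = {u :: real. \<exists>N0. \<forall>n\<ge>N0. GHZ_pow_to_Phi3_pow (nat \<lfloor>u * real n\<rfloor>) n}"
definition WSet :: "real set" where
  "WSet = {tau :: real. \<exists>C N0. \<forall>N\<ge>N0. \<exists>r. bilinear_mm_algo N r \<and> real r \<le> C * real N powr tau}"

lemma WSet_nonneg:
  assumes "tau \<in> WSet" shows "tau \<ge> 0"
proof (rule ccontr)
  assume neg: "\<not> tau \<ge> 0"
  obtain C N0 where H: "\<forall>N\<ge>N0. \<exists>r. mm_tensor N r \<and> real r \<le> C * real N powr tau"
    using assms unfolding WSet_def bilinear_iff_tensor by blast
  have "((\<lambda>N. real N powr tau) \<longlongrightarrow> 0) sequentially"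
    using neg by (intro tendsto_neg_powr filterlim_real_sequentially) auto
  then have "((\<lambda>N. C * real N powr tau) \<longlongrightarrow> 0) sequentially"
    by (rule tendsto_mult_right_zero)
  then have "eventually (\<lambda>N. C * real N powr tau < 1) sequentially"
    by (rule order_tendstoD) simp
  moreover have "eventually (\<lambda>N. N \<ge> max N0 1) sequentially" by (rule eventually_ge_at_top)
  ultimately have "eventually (\<lambda>N. C * real N powr tau < 1 \<and> N \<ge> max N0 1) sequentially"
    by (rule eventually_conj)
  then obtain N where N: "C * real N powr tau < 1" "N \<ge> max N0 1"
    using eventually_sequentially by auto
  then obtain r where r: "mm_tensor N r" "real r \<le> C * real N powr tau" using H by auto
  then have "r = 0" using N by linarith
  then show False using not_mm_0[of N] r(1) N(2) by simp
qed

lemma WSet_bdd: "bdd_below WSet"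
  unfolding bdd_below_def using WSet_nonneg by blast

lemma exists_pow2:
  assumes "N \<ge> (1::nat)" shows "\<exists>n. N \<le> 2 ^ n \<and> 2 ^ n < 2 * N \<and> (\<forall>k. N \<le> 2 ^ k \<longrightarrow> n \<le> k)"
proof -
  define n where "n = (LEAST n. N \<le> 2 ^ n)"
  have ex: "N \<le> 2 ^ N" using less_exp[of N] by simp
  have 1: "N \<le> 2 ^ n" unfolding n_def using ex by (rule LeastI)
  have 3: "\<forall>k. N \<le> 2 ^ k \<longrightarrow> n \<le> k" unfolding n_def by (auto intro: Least_le)
  have 2: "2 ^ n < 2 * N"
  proof (cases n)
    case 0 then show ?thesis using assms by simp
  next
    case (Suc k)
    then have "\<not> N \<le> 2 ^ k" using 3 by (metis Suc_n_not_le_n)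
    then show ?thesis using Suc by simp
  qed
  show ?thesis using 1 2 3 by blast
qed

lemma LamSet_sub:
  assumes "u \<in> LamSet" shows "u \<in> WSet" "u \<ge> 0"
proof -
  obtain N0 where H: "\<forall>n\<ge>N0. mm_tensor (2 ^ n) (2 ^ nat \<lfloor>u * real n\<rfloor>)"
    using assms GHZ_imp_tensor unfolding LamSet_def by blast
  show u0: "u \<ge> 0"
  proof (rule ccontr)
    assume "\<not> u \<ge> 0"
    then have "u * real (max N0 1) \<le> 0"
      by (intro mult_nonpos_nonneg) auto
    then have "\<lfloor>u * real (max N0 1)\<rfloor> \<le> 0" by (simp add: floor_le_zero)
    then have "nat \<lfloor>u * real (max N0 1)\<rfloor> = 0" by simp
    then have "mm_tensor (2 ^ max N0 1) 1" using H by (metis max.cobounded1 power_0)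
    moreover have "(2::nat) \<le> 2 ^ max N0 1"
      by (metis max.cobounded2 power_increasing power_one_right zero_less_numeral Suc_1 one_le_numeral)
    ultimately show False using mm_mono not_mm_2_1 by blast
  qed
  have HH: "\<forall>N\<ge>2 ^ N0. \<exists>r. mm_tensor N r \<and> real r \<le> 2 powr u * real N powr u"
  proof (intro allI impI)
    fix N :: nat assume N: "2 ^ N0 \<le> N"
    then have N1: "N \<ge> 1" by (metis le_trans one_le_numeral one_le_power)
    obtain n where n: "N \<le> 2 ^ n" "2 ^ n < 2 * N" "\<forall>k. N \<le> 2 ^ k \<longrightarrow> n \<le> k"
      using exists_pow2[OF N1] by blast
    have nN0: "N0 \<le> n"
    proof -
      have "(2::nat) ^ N0 \<le> 2 ^ n" using n(1) N by linarith
      then show ?thesis by (simp add: power_le_imp_le_exp)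
    qed
    define m where "m = nat \<lfloor>u * real n\<rfloor>"
    have mm: "mm_tensor N (2 ^ m)" using H nN0 n(1) mm_mono unfolding m_def by blast
    have "real (2 ^ m) = 2 powr real m" by (simp add: powr_realpow)
    also have "\<dots> \<le> 2 powr (u * real n)"
      using u0 by (intro powr_mono) (auto simp: m_def)
    also have "\<dots> = (2 powr real n) powr u" by (simp add: powr_powr mult.commute)
    also have "\<dots> = real (2 ^ n) powr u" by (simp add: powr_realpow)
    also have "\<dots> \<le> real (2 * N) powr u"
    proof -
      have "real (2 ^ n) \<le> real (2 * N)" using n(2) by linarith
      then show ?thesis using u0 by (intro powr_mono2) auto
    qed
    also have "\<dots> = 2 powr u * real N powr u" by (simp add: powr_mult)
    finally show "\<exists>r. mm_tensor N r \<and> real r \<le> 2 powr u * real N powr u"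
      using mm by blast
  qed
  show "u \<in> WSet" unfolding WSet_def bilinear_iff_tensor mem_Collect_eq
    by (rule exI[where x="2 powr u"], rule exI[where x="2 ^ N0"], rule HH)
qed

lemma WSet_to_Lam:
  assumes "tau \<in> WSet" "e > 0" shows "tau + e \<in> LamSet"
proof -
  obtain C N0 where H: "\<forall>N\<ge>N0. \<exists>r. mm_tensor N r \<and> real r \<le> C * real N powr tau"
    using assms unfolding WSet_def bilinear_iff_tensor by blast
  obtain N1 :: nat where N1a: "log 2 (2 * \<bar>C\<bar> + 1) / e < real N1"
    using reals_Archimedean2 by blast
  have N1: "\<forall>n\<ge>N1. 2 * C \<le> 2 powr (e * real n)"
  proof (intro allI impI)
    fix n assume "N1 \<le> n"
    then have "log 2 (2 * \<bar>C\<bar> + 1) \<le> e * real n"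
    proof -
      have "log 2 (2 * \<bar>C\<bar> + 1) < e * real N1" using N1a assms(2) by (simp add: pos_divide_less_eq mult.commute)
      moreover have "e * real N1 \<le> e * real n" using \<open>N1 \<le> n\<close> assms(2) by (intro mult_left_mono) auto
      ultimately show ?thesis by linarith
    qed
    then have "2 powr log 2 (2 * \<bar>C\<bar> + 1) \<le> 2 powr (e * real n)"
      by (intro powr_mono) auto
    then show "2 * C \<le> 2 powr (e * real n)" by simp
  qed
  show ?thesis unfolding LamSet_def
  proof (intro CollectI exI[of _ "max N0 N1"] allI impI)
    fix n assume n: "max N0 N1 \<le> n"
    have "N0 \<le> 2 ^ n" using n less_exp[of n] by linarith
    then obtain r where r: "mm_tensor (2 ^ n) r" "real r \<le> C * real (2 ^ n) powr tau"
      using H by blast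
    define m where "m = nat \<lfloor>(tau + e) * real n\<rfloor>"
    have "real (2 ^ n :: nat) = 2 powr real n" by (simp add: powr_realpow)
    then have "real (2 ^ n :: nat) powr tau = 2 powr (tau * real n)" by (simp add: powr_powr mult.commute)
    then have "real r \<le> C * 2 powr (tau * real n)" using r(2) by simp
    also have "\<dots> \<le> 2 powr (e * real n) / 2 * 2 powr (tau * real n)"
      using N1 n by (intro mult_right_mono) auto
    also have "\<dots> = 2 powr ((tau + e) * real n - 1)"
      by (simp add: powr_diff powr_add algebra_simps)
    also have "\<dots> \<le> 2 powr real m"
      unfolding m_def by (intro powr_mono) linarith+
    also have "\<dots> = real (2 ^ m)" by (simp add: powr_realpow)
    finally have "r \<le> 2 ^ m" by linarith
    then show "GHZ_pow_to_Phi3_pow (nat \<lfloor>(tau + e) * real n\<rfloor>) n"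
      using tensor_imp_GHZ r(1) unfolding m_def by blast
  qed
qed

theorem theorem1:
  shows "lambda_GHZ = omega_mm"
proof -
  have L: "lambda_GHZ = Inf LamSet" by (simp only: lambda_GHZ_def LamSet_def)
  have W: "omega_mm = Inf WSet" by (simp only: omega_mm_def WSet_def)
  have sub: "LamSet \<subseteq> WSet" using LamSet_sub by blast
  have Lbdd: "bdd_below LamSet" using bdd_below_mono[OF WSet_bdd sub] .
  show ?thesis
  proof (cases "WSet = {}")
    case True
    then have "LamSet = {}" using sub by blast
    then show ?thesis using L W True by simp
  next
    case False
    then obtain t where t: "t \<in> WSet" by blast
    then have LN: "LamSet \<noteq> {}" using WSet_to_Lam[of t 1] by auto
    have "Inf LamSet \<le> Inf WSet"
    proof (rule cInf_greatest[OF False])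
      fix tau assume tau: "tau \<in> WSet"
      show "Inf LamSet \<le> tau"
      proof (rule field_le_epsilon)
        fix e :: real assume "e > 0"
        then show "Inf LamSet \<le> tau + e"
          using cInf_lower[OF WSet_to_Lam[OF tau] Lbdd] by blast
      qed
    qed
    moreover have "Inf WSet \<le> Inf LamSet"
      using LN by (rule cInf_greatest) (use sub WSet_bdd cInf_lower in blast)
    ultimately show ?thesis using L W by simp
  qed
qed


end
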